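(* For every integer $n\ge0$, $$\mathfrak{C}_n(x)=\sum_{k=0}^{n}k!\,x^k\sum_{j=0}^{n}\binom nj\left(-\frac k2\right)^j S(n-j,k),$$ where $S(m,k)$ denotes the Stirling numbers of the second kind (with $S(m,k)=0$ for $k>m$).
   Context: For $n\ge1$ the central factorial is $x^{[n]}=x\,(x+\tfrac n2-1)(x+\tfrac n2-2)\cdots(x-\tfrac n2+1)$ (a product of $n$ factors), and $x^{[0]}=1$. The central factorial numbers of the second kind $T(n,k)$ ($0\le k\le n$) are defined by $x^n=\sum_{k=0}^n T(n,k)\,x^{[k]}$; equivalently $T(n,k)=\frac1{k!}\sum_{j=0}^k(-1)^j\binom kj\left(\frac k2-j\right)^n$, and $T(n,k)=0$ for $k>n$. The $n$th central Fubini-like polynomial is $\mathfrak{C}_n(x)=\sum_{k=0}^n k!\,T(n,k)\,x^k$. Stirling numbers of the second kind are defined by $x^n=\sum_k S(n,k)\,x(x-1)\cdots(x-k+1)$. *)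

theory Defs
  imports Complex_Main "HOL-Combinatorics.Stirling"
begin

definition central_fact_T :: "nat \<Rightarrow> nat \<Rightarrow> real" where
  "central_fact_T n k =
     (if k > n then 0
      else (1 / fact k) * (\<Sum>j\<le>k. (-1)^j * real (k choose j) * (real k / 2 - real j) ^ n))"

definition central_fubini :: "nat \<Rightarrow> real \<Rightarrow> real" where
  "central_fubini n x = (\<Sum>k\<le>n. fact k * central_fact_T n k * x ^ k)"

end

theory Submission
  imports Defs
begin

definition E :: "nat \<Rightarrow> nat \<Rightarrow> real" where
  "E m k = (\<Sum>i\<le>k. (-1)^i * real (k choose i) * (real k - real i) ^ m)"

lemma E_rec: "E (Suc m) (Suc k) = real (Suc k) * E m (Suc k) + real (Suc k) * E m k"
proof -
  have "E (Suc m) (Suc k) - real (Suc k) * E m (Suc k) =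
     (\<Sum>i\<le>Suc k. (-1)^i * real (Suc k choose i) * (real (Suc k) - real i) ^ m * (- real i))"
    unfolding E_def sum_distrib_left sum_subtractf[symmetric]
    by (rule sum.cong) (auto simp: algebra_simps)
  also have "\<dots> = (\<Sum>i\<le>k. (-1)^(Suc i) * real (Suc k choose Suc i) * (real (Suc k) - real (Suc i)) ^ m * (- real (Suc i)))"
    by (subst sum.atMost_Suc_shift) simp
  also have "\<dots> = (\<Sum>i\<le>k. real (Suc k) * ((-1)^i * real (k choose i) * (real k - real i) ^ m))"
  proof (rule sum.cong)
    fix i assume "i \<in> {..k}"
    have c: "real (Suc i) * real (Suc k choose Suc i) = real (Suc k) * real (k choose i)"
      by (metis Suc_times_binomial of_nat_mult)
    have d: "real (Suc k) - real (Suc i) = real k - real i" by simp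
    show "(-1)^(Suc i) * real (Suc k choose Suc i) * (real (Suc k) - real (Suc i)) ^ m * (- real (Suc i)) =
      real (Suc k) * ((-1)^i * real (k choose i) * (real k - real i) ^ m)"
    proof -
      have "(-1)^(Suc i) * real (Suc k choose Suc i) * (real (Suc k) - real (Suc i)) ^ m * (- real (Suc i))
        = (-1)^i * ((real (Suc i) * real (Suc k choose Suc i)) * (real k - real i) ^ m)"
        by (simp only: d power_Suc mult_minus_right mult_minus_left minus_minus mult_1_left mult_ac)
      also have "\<dots> = real (Suc k) * ((-1)^i * real (k choose i) * (real k - real i) ^ m)"
        unfolding c by (simp only: mult_ac)
      finally show ?thesis .
    qed
  qed simp
  also have "\<dots> = real (Suc k) * E m k" unfolding E_def sum_distrib_left ..
  finally show ?thesis by simp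
qed

lemma E_Stirling: "E m k = fact k * real (Stirling m k)"
proof (induction m arbitrary: k)
  case 0
  show ?case
  proof (cases k)
    case 0 then show ?thesis by (simp add: E_def)
  next
    case (Suc k')
    have "E 0 k = (\<Sum>i\<le>k. (-1)^i * real (k choose i))" by (simp add: E_def)
    also have "\<dots> = 0" using Suc choose_alternating_sum[of k, where 'a=real] by (simp add: mult.commute)
    finally show ?thesis using Suc by simp
  qed
next
  case (Suc m)
  show ?case
  proof (cases k)
    case 0 then show ?thesis by (simp add: E_def)
  next
    case (Suc k')
    show ?thesis unfolding Suc E_rec Suc.IH
      by (simp add: algebra_simps)
  qed
qed

lemma key:
  "fact k * central_fact_T n k =
   fact k * (\<Sum>j\<le>n. real (n choose j) * (- (real k / 2)) ^ j * real (Stirling (n - j) k))"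
proof (cases "k > n")
  case True
  then have "\<And>j. j \<le> n \<Longrightarrow> Stirling (n - j) k = 0" by simp
  then show ?thesis using True by (simp add: central_fact_T_def)
next
  case False
  have "fact k * (\<Sum>j\<le>n. real (n choose j) * (- (real k / 2)) ^ j * real (Stirling (n - j) k))
     = (\<Sum>j\<le>n. real (n choose j) * (- (real k / 2)) ^ j * E (n - j) k)"
    by (simp add: E_Stirling sum_distrib_left algebra_simps)
  also have "\<dots> = (\<Sum>j\<le>n. \<Sum>i\<le>k. (-1)^i * real (k choose i) *
        (real (n choose j) * (- (real k / 2)) ^ j * (real k - real i) ^ (n - j)))"
    by (simp add: E_def sum_distrib_left algebra_simps)
  also have "\<dots> = (\<Sum>i\<le>k. (-1)^i * real (k choose i) *
        (\<Sum>j\<le>n. real (n choose j) * (- (real k / 2)) ^ j * (real k - real i) ^ (n - j)))"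
    by (subst sum.swap) (simp add: sum_distrib_left)
  also have "\<dots> = (\<Sum>i\<le>k. (-1)^i * real (k choose i) * (real k / 2 - real i) ^ n)"
  proof (rule sum.cong)
    fix i assume "i \<in> {..k}"
    have "(\<Sum>j\<le>n. real (n choose j) * (- (real k / 2)) ^ j * (real k - real i) ^ (n - j))
        = (- (real k / 2) + (real k - real i)) ^ n"
      by (rule binomial_ring[symmetric])
    also have "\<dots> = (real k / 2 - real i) ^ n" by (simp add: algebra_simps)
    finally show "(-1)^i * real (k choose i) *
        (\<Sum>j\<le>n. real (n choose j) * (- (real k / 2)) ^ j * (real k - real i) ^ (n - j))
      = (-1)^i * real (k choose i) * (real k / 2 - real i) ^ n" by simp
  qed simp
  also have "\<dots> = fact k * central_fact_T n k"
    using False by (simp add: central_fact_T_def)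
  finally show ?thesis by simp
qed

theorem theorem3:
  fixes n :: nat and x :: real
  shows "central_fubini n x =
    (\<Sum>k\<le>n. fact k * x ^ k *
       (\<Sum>j\<le>n. real (n choose j) * (- (real k / 2)) ^ j * real (Stirling (n - j) k)))"
  unfolding central_fubini_def
proof (rule sum.cong)
  fix k assume "k \<in> {..n}"
  show "fact k * central_fact_T n k * x ^ k = fact k * x ^ k *
       (\<Sum>j\<le>n. real (n choose j) * (- (real k / 2)) ^ j * real (Stirling (n - j) k))"
    using key[of k n] by (simp add: algebra_simps)
qed simp

end
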